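(* Let $N\ge3$ be an integer, $(N+2)/(N-2)<p<p_{JL}$ and $\lambda>0$. For $\alpha>0$ let $u(r;\alpha)$ be the unique solution of \[ u''+\frac{N-1}{r}u'+\lambda u+|u|^{p-1}u=0\ (r>0),\qquad u(0)=\alpha,\ u'(0)=0. \] Then for each $\alpha>0$, $u(\cdot;\alpha)$ has a zero in $(0,\infty)$.
   Context: The Joseph–Lundgren exponent is $p_{JL}=1+\frac{4}{N-4-2\sqrt{N-1}}$ for $N\ge11$ and $p_{JL}=\infty$ for $3\le N\le10$. *)

theory Defs
  imports "HOL-Analysis.Analysis" "HOL-Library.Extended_Real"
begin

definition p_JL :: "nat \<Rightarrow> ereal" where
  "p_JL N = (if N \<ge> 11
             then ereal (1 + 4 / (real N - 4 - 2 * sqrt (real N - 1)))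
             else \<infinity>)"

end

theory Submission
  imports Defs
begin

lemma alg_helper:
  fixes r m P U U1 U2 S C k lam Q :: real
  assumes r: "r > 0" and e: "U2 = - (2*m) / r * U1 - lam * U - Q * U"
  shows "m * P / r * ((m / r * U + U1) * S - U * k * C) + P * ((- m / r^2 * U + m / r * U1 + U2) * S + (m / r * U + U1) * (C * k) - (U1 * k * C - U * k * (S * k)))
     = P * U * S * (m * (m - 1) / r^2 + k * k - lam - Q)"
  unfolding e using r by (simp add: field_simps power2_eq_square)

theorem proposition3p1:
  fixes N :: nat and p lam \<alpha> :: real and u u' u'' :: "real \<Rightarrow> real"
  assumes N: "N \<ge> 3"
    and p_low: "(real N + 2) / (real N - 2) < p"
    and p_up: "ereal p < p_JL N"
    and lam_pos: "lam > 0"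
    and alpha: "\<alpha> > 0"
    and u_deriv: "\<And>r. r \<ge> 0 \<Longrightarrow> (u has_real_derivative u' r) (at r within {0..})"
    and u'_cont: "continuous_on {0..} u'"
    and u'_deriv: "\<And>r. r > 0 \<Longrightarrow> (u' has_real_derivative u'' r) (at r)"
    and ode: "\<And>r. r > 0 \<Longrightarrow>
       u'' r + (real N - 1) / r * u' r + lam * u r + \<bar>u r\<bar> powr (p - 1) * u r = 0"
    and init: "u 0 = \<alpha>" "u' 0 = 0"
  shows "\<exists>r>0. u r = 0"
proof (rule ccontr)
  assume nz: "\<not> (\<exists>r>0. u r = 0)"
  have ucont: "continuous_on {0..} u"
    using u_deriv by (meson DERIV_continuous continuous_on_eq_continuous_within atLeast_iff)
  have upos: "u r > 0" if "r \<ge> 0" for r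
  proof (rule ccontr)
    assume "\<not> u r > 0"
    hence "u r \<le> 0" by simp
    have "r > 0" using that init alpha \<open>u r \<le> 0\<close> by (cases "r = 0") auto
    have "continuous_on {0..r} u" using ucont by (rule continuous_on_subset) auto
    then obtain x where "0 \<le> x" "x \<le> r" "u x = 0"
      using IVT2'[of u r 0 0] \<open>u r \<le> 0\<close> init alpha \<open>r > 0\<close> by force
    hence "x > 0" using init alpha by (cases "x = 0") auto
    thus False using nz \<open>u x = 0\<close> by auto
  qed
  have uder: "(u has_real_derivative u' r) (at r)" if "r > 0" for r
  proof -
    have "at r within {0..} = at r"
      by (rule at_within_interior) (use that in \<open>simp\<close>)
    thus ?thesis using u_deriv[of r] that by simp
  qed
  define m where "m = (real N - 1) / 2"
  define c where "c = m * (m - 1)"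
  have m1: "m \<ge> 1" using N unfolding m_def by simp
  have c0: "c \<ge> 0" using m1 unfolding c_def by simp
  define k where "k = sqrt (lam / 2)"
  have k0: "k > 0" using lam_pos unfolding k_def by simp
  have kk: "k * k = lam / 2" using lam_pos unfolding k_def by (simp add: real_sqrt_mult[symmetric])
  define a where "a = 1 + 2 * c / lam"
  have a1: "a \<ge> 1" using c0 lam_pos unfolding a_def by simp
  have ca: "c / r^2 \<le> lam / 2" if "r \<ge> a" for r
  proof -
    have r1: "r \<ge> 1" using a1 that by simp
    have "c / r^2 \<le> c / r"
      using c0 r1 by (intro divide_left_mono) (auto simp: power2_eq_square intro: order_trans[of _ "1*r"])
    also have "\<dots> \<le> c / a" using c0 r1 a1 that by (intro divide_left_mono) auto
    also have "\<dots> \<le> lam / 2"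
    proof -
      have "2 * c / lam \<le> a" unfolding a_def by simp
      hence "2 * c \<le> a * lam" using lam_pos by (simp add: divide_le_eq)
      thus ?thesis using a1 lam_pos by (simp add: divide_le_eq field_simps)
    qed
    finally show ?thesis .
  qed
  define b where "b = a + pi / k"
  have ab: "a \<le> b" using k0 unfolding b_def by simp
  define P where "P r = r powr m" for r
  define W where "W r = P r * ((m / r * u r + u' r) * sin (k * (r - a)) - u r * k * cos (k * (r - a)))" for r
  define W' where "W' r = P r * u r * sin (k * (r - a)) * (c / r^2 + k * k - lam - \<bar>u r\<bar> powr (p - 1))" for r
  have Wder: "(W has_real_derivative W' r) (at r)" if "r > 0" for r
  proof -
    have Pd: "(P has_real_derivative (m * P r / r)) (at r)"
      unfolding P_def using that
      by (auto intro!: derivative_eq_intros simp: powr_diff)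
    have E: "u'' r = - (2*m) / r * u' r - lam * u r - \<bar>u r\<bar> powr (p - 1) * u r"
    proof -
      have m2: "2 * m = real N - 1" unfolding m_def by simp
      have "- (2*m) / r * u' r = - ((real N - 1) / r * u' r)" by (simp only: m2)
      thus ?thesis using ode[OF that] by linarith
    qed
    have D: "(W has_real_derivative
       (m * P r / r) * ((m / r * u r + u' r) * sin (k * (r - a)) - u r * k * cos (k * (r - a)))
     + P r * ((- m / r^2 * u r + m / r * u' r + u'' r) * sin (k * (r - a))
           + (m / r * u r + u' r) * (cos (k * (r - a)) * k)
           - (u' r * k * cos (k * (r - a)) - u r * k * (sin (k * (r - a)) * k)))) (at r)"
      unfolding W_def using that
      by (auto intro!: derivative_eq_intros Pd uder u'_deriv simp: power2_eq_square field_simps)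
    show ?thesis
      using D unfolding alg_helper[OF that E] W'_def c_def .
  qed
  have "W b \<le> W a"
  proof (rule DERIV_nonpos_imp_nonincreasing[OF ab])
    fix x assume x: "a \<le> x" "x \<le> b"
    have x0: "x > 0" using x a1 by simp
    have s: "sin (k * (x - a)) \<ge> 0"
    proof (rule sin_ge_zero)
      show "0 \<le> k * (x - a)" using x k0 by simp
      have "k * (x - a) \<le> k * (pi / k)" using x k0 unfolding b_def by (intro mult_left_mono) auto
      thus "k * (x - a) \<le> pi" using k0 by simp
    qed
    have "c / x^2 + k * k - lam - \<bar>u x\<bar> powr (p - 1) \<le> 0"
      using ca[OF x(1)] kk powr_ge_zero[of "\<bar>u x\<bar>" "p - 1"] by linarith
    moreover have "P x * u x * sin (k * (x - a)) \<ge> 0"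
      using s upos[of x] x0 unfolding P_def by simp
    ultimately have "W' x \<le> 0" unfolding W'_def by (simp add: mult_nonneg_nonpos)
    thus "\<exists>y. DERIV W x :> y \<and> y \<le> 0" using Wder x0 by blast
  qed
  moreover have "W a < 0"
  proof -
    have "W a = - (P a * (u a * k))" unfolding W_def by simp
    moreover have "P a * (u a * k) > 0" unfolding P_def using a1 upos[of a] k0 by simp
    ultimately show ?thesis by linarith
  qed
  moreover have "W b > 0"
  proof -
    have "k * (b - a) = pi" using k0 unfolding b_def by simp
    hence "W b = P b * (u b * k)" unfolding W_def by simp
    moreover have "P b * (u b * k) > 0" unfolding P_def using a1 ab upos[of b] k0 by simp
    ultimately show ?thesis by linarith
  qed
  ultimately show False by simp
qed

end
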